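(* Under the hypotheses of the conservation lemma (i.e. $(p^*,q^* )\in(0,1)^2$ maximizes $\ell(p,q,K)$ over $[0,1]^2$ with finite value), with $g(x)=p^*K(x)+q^*(1-K(x))$ we have $g(x)\in[\frac{1}{|B|},1]$ for every $x\in M$ and $g(x)\in[0,\frac{|B|-1}{|B|}]$ for every $x\in B\setminus M$.
   Context: $B\subset\mathbb{R}^d$ finite nonempty, $m:B\to\{0,1\}$, $M=\{x\in B:m(x)=1\}$. For $p,q\in[0,1]$ and $K:B\to[0,1]$, $g(x)=pK(x)+q(1-K(x))$ and $\ell(p,q,K)=\frac{1}{|B|}\big(\sum_{x\in M}\log g(x)+\sum_{x\in B\setminus M}\log(1-g(x))\big)$, with $\log 0=-\infty$. *)

theory Defs
  imports "HOL-Analysis.Analysis"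
begin

text \<open>Logarithm with the convention log 0 = -infinity (only applied to values in [0,1]).\<close>
definition elog :: "real \<Rightarrow> ereal" where
  "elog y = (if y > 0 then ereal (ln y) else -\<infinity>)"

definition gfun :: "real \<Rightarrow> real \<Rightarrow> ('a \<Rightarrow> real) \<Rightarrow> 'a \<Rightarrow> real" where
  "gfun p q K x = p * K x + q * (1 - K x)"

definition ell :: "'a set \<Rightarrow> ('a \<Rightarrow> nat) \<Rightarrow> real \<Rightarrow> real \<Rightarrow> ('a \<Rightarrow> real) \<Rightarrow> ereal" where
  "ell B m p q K =
     ereal (1 / real (card B)) *
       ((\<Sum>x\<in>{x\<in>B. m x = 1}. elog (gfun p q K x)) +
        (\<Sum>x\<in>B - {x\<in>B. m x = 1}. elog (1 - gfun p q K x)))"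

end

theory Submission
  imports Defs
begin

lemma g_open:
  fixes p q k :: real
  assumes "0 < p" "p < 1" "0 < q" "q < 1" "0 \<le> k" "k \<le> 1"
  shows "0 < p * k + q * (1 - k) \<and> p * k + q * (1 - k) < 1"
proof -
  have "p * k \<le> 1 * k" using assms by (intro mult_right_mono) auto
  have "q * (1-k) \<le> 1 * (1-k)" using assms by (intro mult_right_mono) auto
  show ?thesis
  proof (cases "k = 0")
    case True then show ?thesis using assms by simp
  next
    case False
    then have "0 < p * k" using assms by simp
    moreover have "0 \<le> q * (1-k)" using assms by simp
    moreover have "p * k < k" using assms False by simp
    ultimately show ?thesis using \<open>q * (1-k) \<le> 1 * (1-k)\<close> by simp
  qed
qed

definition SS :: "'a set \<Rightarrow> ('a \<Rightarrow> nat) \<Rightarrow> real \<Rightarrow> real \<Rightarrow> ('a \<Rightarrow> real) \<Rightarrow> real" where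
  "SS B m p q K = (\<Sum>x\<in>{x\<in>B. m x = 1}. ln (gfun p q K x)) +
        (\<Sum>x\<in>B - {x\<in>B. m x = 1}. ln (1 - gfun p q K x))"

lemma ell_real:
  assumes "\<forall>x\<in>B. 0 < gfun p q K x \<and> gfun p q K x < 1"
  shows "ell B m p q K = ereal (1 / real (card B) * SS B m p q K)"
proof -
  have 1: "(\<Sum>x\<in>{x\<in>B. m x = 1}. elog (gfun p q K x)) = (\<Sum>x\<in>{x\<in>B. m x = 1}. ereal (ln (gfun p q K x)))"
    using assms by (intro sum.cong) (auto simp: elog_def)
  have 2: "(\<Sum>x\<in>B - {x\<in>B. m x = 1}. elog (1 - gfun p q K x)) = (\<Sum>x\<in>B - {x\<in>B. m x = 1}. ereal (ln (1 - gfun p q K x)))"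
    using assms by (intro sum.cong) (auto simp: elog_def)
  show ?thesis unfolding ell_def 1 2 SS_def by simp
qed

lemma SS_le:
  fixes B :: "'a set"
  assumes fin: "finite B" and ne: "B \<noteq> {}"
    and K: "\<forall>x\<in>B. K x \<in> {0..1}"
    and ps: "ps \<in> {0<..<1}" and qs: "qs \<in> {0<..<1}"
    and mx: "\<forall>p\<in>{0..1}. \<forall>q\<in>{0..1}. ell B m p q K \<le> ell B m ps qs K"
    and p: "0 < p" "p < 1" and q: "0 < q" "q < 1"
  shows "SS B m p q K \<le> SS B m ps qs K"
proof -
  have gp: "\<forall>x\<in>B. 0 < gfun p q K x \<and> gfun p q K x < 1"
    using g_open p q K unfolding gfun_def by auto
  have gs: "\<forall>x\<in>B. 0 < gfun ps qs K x \<and> gfun ps qs K x < 1"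
    using g_open ps qs K unfolding gfun_def by auto
  have "ell B m p q K \<le> ell B m ps qs K" using mx p q by auto
  then have "1 / real (card B) * SS B m p q K \<le> 1 / real (card B) * SS B m ps qs K"
    using ell_real[OF gp] ell_real[OF gs] by simp
  moreover have "card B > 0" using fin ne by (simp add: card_gt_0_iff)
  ultimately show ?thesis by (simp add: divide_le_cancel)
qed

theorem lemmaA2:
  fixes B :: "(real ^ 'd) set" and m :: "real ^ 'd \<Rightarrow> nat"
    and K :: "real ^ 'd \<Rightarrow> real" and ps qs :: real
  assumes "finite B" and "B \<noteq> {}"
    and "\<forall>x\<in>B. m x \<in> {0, 1}"
    and "\<forall>x\<in>B. K x \<in> {0..1}"
    and "ps \<in> {0<..<1}" and "qs \<in> {0<..<1}"
    and "\<forall>p\<in>{0..1}. \<forall>q\<in>{0..1}. ell B m p q K \<le> ell B m ps qs K"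
    and "\<bar>ell B m ps qs K\<bar> \<noteq> \<infinity>"
  shows "(\<forall>x\<in>{x\<in>B. m x = 1}. gfun ps qs K x \<in> {1 / real (card B)..1}) \<and>
         (\<forall>x\<in>B - {x\<in>B. m x = 1}. gfun ps qs K x \<in> {0..(real (card B) - 1) / real (card B)})"
proof -
  note fin = assms(1) and ne = assms(2) and K = assms(4) and ps = assms(5) and qs = assms(6)
    and mx = assms(7)
  define M where "M = {x\<in>B. m x = 1}"
  define C where "C = B - M"
  define g where "g = gfun ps qs K"
  define n where "n = card B"
  have finM: "finite M" and finC: "finite C" using fin by (auto simp: M_def C_def)
  have gs: "\<forall>x\<in>B. 0 < g x \<and> g x < 1"
    using g_open ps qs K unfolding gfun_def g_def by auto
  have npos: "n > 0" using fin ne by (simp add: n_def card_gt_0_iff)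
  have nr: "real (n - 1) = real n - 1" using npos by (simp add: of_nat_diff)
  have SSle: "\<And>p q. 0 < p \<Longrightarrow> p < 1 \<Longrightarrow> 0 < q \<Longrightarrow> q < 1 \<Longrightarrow> SS B m p q K \<le> SS B m ps qs K"
    using SS_le[OF fin ne K ps qs mx] by blast
  define F1 where "F1 t = (\<Sum>x\<in>M. ln (t * g x)) + (\<Sum>x\<in>C. ln (1 - t * g x))" for t
  have F1eq: "F1 t = SS B m (t*ps) (t*qs) K" for t
    unfolding F1_def SS_def M_def C_def g_def gfun_def by (simp add: algebra_simps)
  have "DERIV F1 1 :> (\<Sum>x\<in>M. 1) + (\<Sum>x\<in>C. - g x / (1 - g x))"
    unfolding F1_def
  proof (intro derivative_intros DERIV_sum)
    fix x assume "x \<in> M"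
    then have "0 < g x" using gs by (auto simp: M_def)
    show "((\<lambda>t. ln (t * g x)) has_field_derivative 1) (at 1)"
      using \<open>0 < g x\<close> by (auto intro!: derivative_eq_intros)
  next
    fix x assume "x \<in> C"
    then have "g x < 1" using gs by (auto simp: C_def)
    show "((\<lambda>t. ln (1 - t * g x)) has_field_derivative - g x / (1 - g x)) (at 1)"
      using \<open>g x < 1\<close> by (auto intro!: derivative_eq_intros simp: divide_simps)
  qed
  moreover have "\<forall>y. \<bar>1 - y\<bar> < min (1-ps) (1-qs) \<longrightarrow> F1 y \<le> F1 1"
  proof (intro allI impI)
    fix y assume y: "\<bar>1 - y\<bar> < min (1-ps) (1-qs)"
    have "y * ps < 1"
    proof -
      have "y * ps \<le> (2 - ps) * ps" using y ps by (intro mult_right_mono) auto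
      also have "\<dots> = 1 - (1-ps)^2" by (simp add: power2_eq_square algebra_simps)
      also have "\<dots> < 1" using ps by simp
      finally show ?thesis .
    qed
    moreover have "y * qs < 1"
    proof -
      have "y * qs \<le> (2 - qs) * qs" using y qs by (intro mult_right_mono) auto
      also have "\<dots> = 1 - (1-qs)^2" by (simp add: power2_eq_square algebra_simps)
      also have "\<dots> < 1" using qs by simp
      finally show ?thesis .
    qed
    moreover have "y > 0" using y ps qs by auto
    ultimately show "F1 y \<le> F1 1" unfolding F1eq using ps qs SSle[of "y*ps" "y*qs"] by simp
  qed
  moreover have "0 < min (1-ps) (1-qs)" using ps qs by auto
  ultimately have eq1: "(\<Sum>x\<in>M. 1) + (\<Sum>x\<in>C. - g x / (1 - g x)) = 0"
    by (meson DERIV_local_max)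
  define F2 where "F2 t = (\<Sum>x\<in>M. ln (1 - t * (1 - g x))) + (\<Sum>x\<in>C. ln (t * (1 - g x)))" for t
  have F2eq: "F2 t = SS B m (1 - t*(1-ps)) (1 - t*(1-qs)) K" for t
    unfolding F2_def SS_def M_def C_def g_def gfun_def by (simp add: algebra_simps)
  have "DERIV F2 1 :> (\<Sum>x\<in>M. - (1 - g x) / g x) + (\<Sum>x\<in>C. 1)"
    unfolding F2_def
  proof (intro derivative_intros DERIV_sum)
    fix x assume "x \<in> C"
    then have "g x < 1" using gs by (auto simp: C_def)
    show "((\<lambda>t. ln (t * (1 - g x))) has_field_derivative 1) (at 1)"
      using \<open>g x < 1\<close> by (auto intro!: derivative_eq_intros)
  next
    fix x assume "x \<in> M"
    then have "0 < g x" using gs by (auto simp: M_def)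
    show "((\<lambda>t. ln (1 - t * (1 - g x))) has_field_derivative - (1 - g x) / g x) (at 1)"
      using \<open>0 < g x\<close> by (auto intro!: derivative_eq_intros simp: divide_simps)
  qed
  moreover have "\<forall>y. \<bar>1 - y\<bar> < min ps qs \<longrightarrow> F2 y \<le> F2 1"
  proof (intro allI impI)
    fix y assume y: "\<bar>1 - y\<bar> < min ps qs"
    have "y * (1-ps) < 1"
    proof -
      have "y * (1-ps) \<le> (1 + ps) * (1-ps)" using y ps by (intro mult_right_mono) auto
      also have "\<dots> = 1 - ps^2" by (simp add: power2_eq_square algebra_simps)
      also have "\<dots> < 1" using ps by simp
      finally show ?thesis .
    qed
    moreover have "y * (1-qs) < 1"
    proof -
      have "y * (1-qs) \<le> (1 + qs) * (1-qs)" using y qs by (intro mult_right_mono) auto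
      also have "\<dots> = 1 - qs^2" by (simp add: power2_eq_square algebra_simps)
      also have "\<dots> < 1" using qs by simp
      finally show ?thesis .
    qed
    moreover have "y > 0" using y ps qs by auto
    ultimately show "F2 y \<le> F2 1" unfolding F2eq using ps qs
      SSle[of "1 - y*(1-ps)" "1 - y*(1-qs)"] by simp
  qed
  moreover have "0 < min ps qs" using ps qs by auto
  ultimately have eq2: "(\<Sum>x\<in>M. - (1 - g x) / g x) + (\<Sum>x\<in>C. 1) = 0"
    by (meson DERIV_local_max)
  have s1: "(\<Sum>x\<in>C. g x / (1 - g x)) = real (card M)"
    using eq1 by (simp add: sum_negf)
  have s2: "(\<Sum>x\<in>M. (1 - g x) / g x) = real (card C)"
  proof -
    have "(\<Sum>x\<in>M. - (1 - g x) / g x) = - (\<Sum>x\<in>M. (1 - g x) / g x)"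
      by (simp add: sum_negf[symmetric] minus_divide_left)
    then show ?thesis using eq2 by simp
  qed
  have part1: "\<forall>x\<in>M. g x \<in> {1 / real n..1}"
  proof
    fix x assume xM: "x \<in> M"
    have g0: "0 < g x" "g x < 1" using gs xM by (auto simp: M_def)
    have "(1 - g x) / g x \<le> (\<Sum>x\<in>M. (1 - g x) / g x)"
      using xM finM gs by (intro member_le_sum) (auto simp: M_def)
    also have "\<dots> = real (card C)" by (rule s2)
    also have "card C \<le> card (B - {x})"
      using xM fin by (intro card_mono) (auto simp: C_def)
    also have "card (B - {x}) = n - 1" using xM fin by (simp add: n_def M_def)
    finally have "(1 - g x) / g x \<le> real (n - 1)" by simp
    then have "1 - g x \<le> real (n-1) * g x" using g0 by (simp add: divide_simps del: of_nat_diff)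
    moreover have "real n * g x = real (n-1) * g x + g x" unfolding nr by (simp add: algebra_simps)
    ultimately have "1 \<le> real n * g x" by linarith
    then show "g x \<in> {1 / real n..1}" using g0 npos by (simp add: divide_simps mult.commute)
  qed
  have part2: "\<forall>x\<in>C. g x \<in> {0..(real n - 1) / real n}"
  proof
    fix x assume xC: "x \<in> C"
    have g0: "0 < g x" "g x < 1" using gs xC by (auto simp: C_def)
    have "g x / (1 - g x) \<le> (\<Sum>x\<in>C. g x / (1 - g x))"
      using xC finC gs by (intro member_le_sum) (auto simp: C_def)
    also have "\<dots> = real (card M)" by (rule s1)
    also have "card M \<le> card (B - {x})"
      using xC fin by (intro card_mono) (auto simp: C_def M_def)
    also have "card (B - {x}) = n - 1" using xC fin by (simp add: n_def C_def)
    finally have "g x / (1 - g x) \<le> real (n - 1)" by simp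
    then have "g x \<le> real (n-1) * (1 - g x)" using g0 by (simp add: divide_simps del: of_nat_diff)
    moreover have "real n * g x = real (n-1) * g x + g x" unfolding nr by (simp add: algebra_simps)
    ultimately have "real n * g x \<le> real n - 1" using nr by (simp add: algebra_simps del: of_nat_diff)
    then show "g x \<in> {0..(real n - 1) / real n}" using g0 npos by (simp add: divide_simps mult.commute)
  qed
  show ?thesis using part1 part2 unfolding M_def C_def g_def n_def by blast
qed

end
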